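(* Let $A$ and $B$ be pure parabolic isometries of $\mathbb{H}^4$. Then $A$ and $B$ are linked.
   Context: A pure parabolic isometry of $\mathbb{H}^4$ is a composition of reflections in two hyperplanes tangent at a unique point at infinity. Two isometries $A,B$ are linked if there are involutions $\alpha,\beta,\gamma$ of $\mathbb{H}^4$ with $A=\alpha\beta$ and $B=\beta\gamma$. *)

theory Defs
  imports "HOL-Analysis.Analysis"
begin

text \<open>Hyperboloid model of hyperbolic 4-space inside Minkowski space R^(4,1),
  realised as real^5; coordinate 0 is the time-like coordinate.\<close>

definition mink :: "real^5 \<Rightarrow> real^5 \<Rightarrow> real" where
  "mink x y = (\<Sum>i\<in>UNIV. (if i = 0 then -1 else 1) * (x $ i) * (y $ i))"

definition H4 :: "(real^5) set" where
  "H4 = {x. mink x x = -1 \<and> x $ 0 > 0}"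

text \<open>Points at infinity: future null directions, normalised by time coordinate 1.\<close>
definition ideal_pts :: "(real^5) set" where
  "ideal_pts = {p. mink p p = 0 \<and> p $ 0 = 1}"

text \<open>Isometries of H^4 (w.r.t. the hyperbolic distance arcosh(-<x,y>)):
  bijections of H4 preserving the Minkowski form on H4. Maps are only
  relevant through their values on H4.\<close>
definition isometry :: "(real^5 \<Rightarrow> real^5) \<Rightarrow> bool" where
  "isometry f \<longleftrightarrow> bij_betw f H4 H4 \<and> (\<forall>x\<in>H4. \<forall>y\<in>H4. mink (f x) (f y) = mink x y)"

definition involution :: "(real^5 \<Rightarrow> real^5) \<Rightarrow> bool" where
  "involution f \<longleftrightarrow> isometry f \<and> (\<forall>x\<in>H4. f (f x) = x) \<and> (\<exists>x\<in>H4. f x \<noteq> x)"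

definition unit_spacelike :: "real^5 \<Rightarrow> bool" where
  "unit_spacelike n \<longleftrightarrow> mink n n = 1"

definition hyperplane :: "real^5 \<Rightarrow> (real^5) set" where
  "hyperplane n = {x\<in>H4. mink x n = 0}"

definition ideal_boundary :: "real^5 \<Rightarrow> (real^5) set" where
  "ideal_boundary n = {p\<in>ideal_pts. mink p n = 0}"

definition refl :: "real^5 \<Rightarrow> real^5 \<Rightarrow> real^5" where
  "refl n x = x - (2 * mink x n) *\<^sub>R n"

definition pure_parabolic :: "(real^5 \<Rightarrow> real^5) \<Rightarrow> bool" where
  "pure_parabolic A \<longleftrightarrow>
     (\<exists>n1 n2. unit_spacelike n1 \<and> unit_spacelike n2 \<and>
        hyperplane n1 \<inter> hyperplane n2 = {} \<and>
        (\<exists>!p. p \<in> ideal_boundary n1 \<inter> ideal_boundary n2) \<and>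
        (\<forall>x\<in>H4. A x = refl n1 (refl n2 x)))"

definition linked :: "(real^5 \<Rightarrow> real^5) \<Rightarrow> (real^5 \<Rightarrow> real^5) \<Rightarrow> bool" where
  "linked A B \<longleftrightarrow> (\<exists>\<alpha> \<beta> \<gamma>. involution \<alpha> \<and> involution \<beta> \<and> involution \<gamma> \<and>
     (\<forall>x\<in>H4. A x = \<alpha> (\<beta> x) \<and> B x = \<beta> (\<gamma> x)))"

end

theory Submission
  imports Defs
begin

lemma inner5: "inner (x::real^5) y = (\<Sum>i\<in>UNIV. x$i * y$i)"
  by (simp add: inner_vec_def)
lemma mink_inner: "mink x y = inner x y - 2 * (x$0) * (y$0)"
proof -
  have "mink x y = (\<Sum>i\<in>UNIV. x$i*y$i - (if i = 0 then 2 * x$i*y$i else 0))"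
    unfolding mink_def by (rule sum.cong) auto
  also have "\<dots> = inner x y - 2 * (x$0) * (y$0)"
    by (simp add: sum_subtractf inner5 sum.If_cases)
  finally show ?thesis .
qed
lemma mink_sym: "mink x y = mink y x" by (simp add: mink_inner inner_commute)
lemma mink_add_left[simp]: "mink (x+y) z = mink x z + mink y z" by (simp add: mink_inner inner_add_left algebra_simps)
lemma mink_add_right[simp]: "mink z (x+y) = mink z x + mink z y" by (simp add: mink_inner inner_add_right algebra_simps)
lemma mink_diff_left[simp]: "mink (x-y) z = mink x z - mink y z" by (simp add: mink_inner inner_diff_left algebra_simps)
lemma mink_diff_right[simp]: "mink z (x-y) = mink z x - mink z y" by (simp add: mink_inner inner_diff_right algebra_simps)
lemma mink_minus_left[simp]: "mink (-x) z = - mink x z" by (simp add: mink_inner)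
lemma mink_minus_right[simp]: "mink z (-x) = - mink z x" by (simp add: mink_inner)
lemma mink_scaleR_left[simp]: "mink (c *\<^sub>R x) z = c * mink x z" by (simp add: mink_inner algebra_simps)
lemma mink_scaleR_right[simp]: "mink z (c *\<^sub>R x) = c * mink z x" by (simp add: mink_inner algebra_simps)
lemma mink_zero_left[simp]: "mink 0 z = 0" by (simp add: mink_inner)
lemma mink_zero_right[simp]: "mink z 0 = 0" by (simp add: mink_inner)

definition sp :: "real^5 \<Rightarrow> real^5" where "sp x = x - (x$0) *\<^sub>R axis 0 1"
lemma mink_sp: "mink x y = inner (sp x) (sp y) - x$0 * y$0"
  by (simp add: sp_def mink_inner inner_diff_left inner_diff_right inner_axis inner_commute algebra_simps)

lemma null_time_zero: assumes "mink q q = 0" "q$0 = 0" shows "q = 0"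
proof -
  have "inner (sp q) (sp q) = 0" using assms by (simp add: mink_sp)
  hence "sp q = 0" by simp
  thus ?thesis using assms(2) by (simp add: sp_def)
qed

lemma perp_null: assumes "mink q q = 0" "q \<noteq> 0" "mink w q = 0" shows "mink w w \<ge> 0"
proof -
  have q0: "q$0 \<noteq> 0" using null_time_zero assms by blast
  have a: "inner (sp q) (sp q) = (q$0)^2" using assms(1) by (simp add: mink_sp power2_eq_square)
  have b: "inner (sp w) (sp q) = w$0 * q$0" using assms(3) by (simp add: mink_sp)
  have "(inner (sp w) (sp q))^2 \<le> inner (sp w) (sp w) * inner (sp q) (sp q)"
    by (metis Cauchy_Schwarz_ineq)
  hence "(w$0)^2 * (q$0)^2 \<le> inner (sp w) (sp w) * (q$0)^2" using a b by (simp add: power_mult_distrib)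
  hence "(w$0)^2 \<le> inner (sp w) (sp w)" using q0 by simp
  thus ?thesis by (simp add: mink_sp power2_eq_square)
qed

lemma time_pos: assumes "x \<in> H4" "mink y y = -1" "mink x y < 0" shows "y$0 > 0"
proof (rule ccontr)
  assume "\<not> y$0 > 0"
  hence y0: "y$0 \<le> 0" by simp
  have x0: "x$0 > 0" and xx: "mink x x = -1" using assms(1) by (auto simp: H4_def)
  have X: "inner (sp x) (sp x) = (x$0)^2 - 1" using xx by (simp add: mink_sp power2_eq_square)
  have Y: "inner (sp y) (sp y) = (y$0)^2 - 1" using assms(2) by (simp add: mink_sp power2_eq_square)
  have XY: "inner (sp x) (sp y) < x$0 * y$0" using assms(3) by (simp add: mink_sp)
  have "x$0 * y$0 \<le> 0" using x0 y0 by (simp add: mult_nonneg_nonpos)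
  have "(inner (sp x) (sp y))^2 \<le> inner (sp x) (sp x) * inner (sp y) (sp y)"
    by (metis Cauchy_Schwarz_ineq)
  hence C: "(inner (sp x) (sp y))^2 \<le> ((x$0)^2 - 1) * ((y$0)^2 - 1)" using X Y by simp
  have "(x$0 * y$0)^2 < (inner (sp x) (sp y))^2"
  proof -
    have "(-(x$0 * y$0))^2 < (-(inner (sp x) (sp y)))^2"
      using XY \<open>x$0 * y$0 \<le> 0\<close> by (intro power_strict_mono) auto
    thus ?thesis by simp
  qed
  moreover have "0 \<le> inner (sp x) (sp x)" by simp
  ultimately have "(x$0)^2 * (y$0)^2 < ((x$0)^2 - 1) * ((y$0)^2 - 1)" using C by (simp add: power_mult_distrib)
  hence "(x$0)^2 + (y$0)^2 < 1" by (simp add: algebra_simps)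
  moreover have "(x$0)^2 \<ge> 1" using X inner_ge_zero[of "sp x"] by linarith
  moreover have "(y$0)^2 \<ge> 0" by simp
  ultimately show False by linarith
qed

lemma H4_normalize: assumes "mink w w < 0" shows "\<exists>c. c *\<^sub>R w \<in> H4"
proof -
  have "w$0 \<noteq> 0"
  proof
    assume "w$0 = 0" then have "mink w w = inner (sp w) (sp w)" by (simp add: mink_sp)
    thus False using assms inner_ge_zero[of "sp w"] by linarith
  qed
  define c where "c = sgn (w$0) / sqrt (- mink w w)"
  have "mink (c *\<^sub>R w) (c *\<^sub>R w) = -1"
    using assms \<open>w$0 \<noteq> 0\<close> by (simp add: c_def power2_eq_square[symmetric] sgn_if)
  moreover have "(c *\<^sub>R w)$0 > 0" using assms \<open>w$0 \<noteq> 0\<close> 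
    by (auto simp: c_def sgn_if divide_simps)
  ultimately show ?thesis by (auto simp: H4_def)
qed


lemma H4I: "y$0 > 0 \<Longrightarrow> mink y y = -1 \<Longrightarrow> y \<in> H4" by (simp add: H4_def)
lemma refl_mink: assumes "mink n n = 1" shows "mink (refl n x) (refl n y) = mink x y"
proof -
  have s: "mink n x = mink x n" "mink n y = mink y n" by (simp_all add: mink_sym)
  show ?thesis using assms by (simp add: refl_def s algebra_simps)
qed
lemma refl_refl: assumes "mink n n = 1" shows "refl n (refl n x) = x"
  using assms by (simp add: refl_def algebra_simps)
lemma refl_H4: assumes "mink n n = 1" "x \<in> H4" shows "refl n x \<in> H4"
proof -
  have m: "mink (refl n x) (refl n x) = -1" using assms by (simp add: refl_mink H4_def)
  have s: "mink n x = mink x n" by (simp add: mink_sym)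
  have "mink x (refl n x) = mink x x - 2 * (mink x n)^2" by (simp add: refl_def power2_eq_square s)
  also have "\<dots> < 0" using assms(2) zero_le_power2[of "mink x n"] unfolding H4_def by (simp; linarith)
  finally have "mink x (refl n x) < 0" .
  from time_pos[OF assms(2) m this] m show ?thesis by (rule H4I)
qed
lemma refl_sign: assumes "c^2 = 1" shows "refl (c *\<^sub>R n) = refl n"
  using assms by (auto simp: refl_def fun_eq_iff power2_eq_square)

lemma isometryI: assumes "\<forall>x\<in>H4. f x \<in> H4" "\<forall>x\<in>H4. g x \<in> H4" "\<forall>x\<in>H4. g (f x) = x"
   "\<forall>x\<in>H4. f (g x) = x" "\<forall>x\<in>H4. \<forall>y\<in>H4. mink (f x) (f y) = mink x y"
  shows "isometry f"
  unfolding isometry_def using assms by (auto intro!: bij_betw_byWitness[where f'=g])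

lemma par_formula: assumes "mink n1 n1 = 1" "mink n1 q = 0" "mink q q = 0"
  shows "refl n1 (refl (n1+q) x) = x + (2*mink x q) *\<^sub>R n1 - (2*(mink x n1 + mink x q)) *\<^sub>R q"
proof -
  have s: "mink q n1 = 0" using assms(2) by (simp add: mink_sym)
  show ?thesis using assms s by (simp add: refl_def vec_eq_iff algebra_simps)
qed

lemma par_inv_formula: assumes "mink n1 n1 = 1" "mink n1 q = 0" "mink q q = 0"
  shows "refl (n1+q) (refl n1 x) = x - (2*mink x q) *\<^sub>R n1 + (2*(mink x n1 - mink x q)) *\<^sub>R q"
proof -
  have s: "mink q n1 = 0" using assms(2) by (simp add: mink_sym)
  show ?thesis using assms s by (simp add: refl_def vec_eq_iff algebra_simps)
qed

definition beta :: "real^5 \<Rightarrow> real^5 \<Rightarrow> real^5 \<Rightarrow> real^5" where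
 "beta u v x = -x + (2 / mink u v) *\<^sub>R (mink x v *\<^sub>R u + mink x u *\<^sub>R v)"

lemma beta_add: "beta u v (x + y) = beta u v x + beta u v y"
  by (simp add: beta_def algebra_simps)
lemma beta_diff: "beta u v (x - y) = beta u v x - beta u v y"
  by (simp add: beta_def algebra_simps)
lemma beta_scaleR: "beta u v (a *\<^sub>R x) = a *\<^sub>R beta u v x"
  by (simp add: beta_def algebra_simps)

locale nullpair = fixes u v :: "real^5"
  assumes uu: "mink u u = 0" and vv: "mink v v = 0" and uv: "mink u v \<noteq> 0"
begin
lemma vu: "mink v u = mink u v" by (simp add: mink_sym)
lemma beta_u: "beta u v u = u"
  using uu uv by (simp add: beta_def vu vec_eq_iff algebra_simps)
lemma beta_v: "beta u v v = v"
  using vv uv by (simp add: beta_def vu vec_eq_iff algebra_simps)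
lemma beta_mink: "mink (beta u v x) (beta u v y) = mink x y"
proof -
  have s: "mink u x = mink x u" "mink v x = mink x v" "mink u y = mink y u" "mink v y = mink y v" "mink y x = mink x y"
    by (simp_all add: mink_sym)
  show ?thesis using uu vv uv by (simp add: beta_def s vu algebra_simps field_simps)
qed
lemma beta_beta: "beta u v (beta u v x) = x"
  using uu vv uv by (simp add: beta_def vu vec_eq_iff algebra_simps field_simps)

lemma u_nz: "u \<noteq> 0" using uv by auto

lemma beta_H4: assumes "x \<in> H4" shows "beta u v x \<in> H4"
proof -
  define k where "k = mink u v"
  define a where "a = mink x u"
  define b where "b = mink x v"
  have xx: "mink x x = -1" using assms by (simp add: H4_def)
  have k0: "k \<noteq> 0" using uv by (simp add: k_def)
  define w where "w = x - (1/k) *\<^sub>R (b *\<^sub>R u + a *\<^sub>R v)"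
  have s: "mink u x = a" "mink v x = b" by (simp_all add: a_def b_def mink_sym)
  have wu: "mink w u = 0" using uu k0 by (simp add: w_def a_def[symmetric] vu k_def[symmetric])
  have "mink w w \<ge> 0" using perp_null[OF uu u_nz wu] .
  moreover have "mink w w = -1 - 2 * (a*b/k)"
    using uu vv k0 xx by (simp add: w_def s a_def[symmetric] b_def[symmetric] vu k_def[symmetric] algebra_simps field_simps)
  ultimately have t: "a*b/k \<le> -1/2" by linarith
  have "mink x (beta u v x) = 1 + 4 * (a*b/k)"
    using xx by (simp add: beta_def a_def[symmetric] b_def[symmetric] k_def[symmetric] algebra_simps field_simps)
  also have "\<dots> < 0" using t by linarith
  finally have neg: "mink x (beta u v x) < 0" .
  have m: "mink (beta u v x) (beta u v x) = -1" using xx beta_mink by simp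
  from time_pos[OF assms m neg] m show ?thesis by (rule H4I)
qed

lemma beta_conj: assumes "mink n1 n1 = 1" "mink n1 q = 0" "mink q q = 0"
  "beta u v q = q" "beta u v n1 = -n1 + s *\<^sub>R q"
  shows "beta u v (refl n1 (refl (n1+q) (beta u v y))) = refl (n1+q) (refl n1 y)"
proof -
  have e1: "mink (beta u v y) q = mink y q"
    using beta_mink[of y q] assms(4) by simp
  have e2: "mink (beta u v y) n1 = - mink y n1 + s * mink y q"
    using beta_mink[of "beta u v y" n1] assms(5) by (simp add: beta_beta)
  show ?thesis
    unfolding par_formula[OF assms(1-3)] par_inv_formula[OF assms(1-3)]
    by (simp add: beta_add beta_diff beta_scaleR beta_beta assms(4,5) e1 e2 vec_eq_iff algebra_simps)
qed
end


definition e0 :: "real^5" where "e0 = axis 0 1"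
lemma e0_mink: "mink e0 x = - x$0"
proof -
  have "inner e0 x = x$0" unfolding e0_def by (simp add: inner_axis')
  thus ?thesis by (simp add: mink_inner e0_def)
qed
lemma e00: "e0$0 = 1" by (simp add: e0_def axis_def)
lemma e0e0: "mink e0 e0 = -1" by (simp add: e0_mink e00)
lemma e0_H4: "e0 \<in> H4" by (rule H4I) (simp_all add: e00 e0e0)

lemma hyp_meet: assumes "mink w w < 0" "mink w n1 = 0" "mink w n2 = 0"
  shows "hyperplane n1 \<inter> hyperplane n2 \<noteq> {}"
proof -
  obtain c where c: "c *\<^sub>R w \<in> H4" using H4_normalize[OF assms(1)] by blast
  hence "c *\<^sub>R w \<in> hyperplane n1 \<inter> hyperplane n2" using assms by (simp add: hyperplane_def)
  thus ?thesis by blast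
qed

lemma parabolic_data: assumes "pure_parabolic A"
  shows "\<exists>n1 q. mink n1 n1 = 1 \<and> mink n1 q = 0 \<and> mink q q = 0 \<and> q \<noteq> 0 \<and>
     (\<forall>x\<in>H4. A x = refl n1 (refl (n1+q) x))"
proof -
  obtain n1 n2 where n1: "mink n1 n1 = 1" and n2: "mink n2 n2 = 1"
    and disj: "hyperplane n1 \<inter> hyperplane n2 = {}"
    and ex: "\<exists>p. p \<in> ideal_boundary n1 \<inter> ideal_boundary n2"
    and Aeq: "\<forall>x\<in>H4. A x = refl n1 (refl n2 x)"
    using assms unfolding pure_parabolic_def unit_spacelike_def by blast
  define c where "c = mink n1 n2"
  have c': "mink n2 n1 = c" by (simp add: c_def mink_sym)
  have not_lt: "\<not> c^2 < 1"
  proof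
    assume lt: "c^2 < 1"
    define u where "u = n2 - c *\<^sub>R n1"
    define d where "d = 1 - c^2"
    have d0: "d > 0" using lt by (simp add: d_def)
    have un1: "mink u n1 = 0" "mink n1 u = 0" using n1 by (simp_all add: u_def c' c_def)
    have uu: "mink u u = d" using n1 n2 by (simp add: u_def c' c_def[symmetric] d_def power2_eq_square algebra_simps)
    define a1 where "a1 = mink e0 n1"
    define a2 where "a2 = mink e0 u"
    define w where "w = e0 - a1 *\<^sub>R n1 - (a2/d) *\<^sub>R u"
    have wn1: "mink w n1 = 0" using n1 un1 by (simp add: w_def a1_def)
    have wu: "mink w u = 0" using d0 un1 uu by (simp add: w_def a2_def)
    have wn2: "mink w n2 = 0"
    proof -
      have "n2 = u + c *\<^sub>R n1" by (simp add: u_def)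
      thus ?thesis using wn1 wu by simp
    qed
    have w1: "mink n1 w = 0" "mink u w = 0" using wn1 wu by (simp_all add: mink_sym[of n1 w] mink_sym[of u w])
    have "mink w w = mink e0 w" using w1 unfolding w_def[of ] by (simp only: mink_diff_left mink_scaleR_left)
    also have "\<dots> = mink e0 e0 - a1 * a1 - (a2/d) * a2" by (simp add: w_def a1_def a2_def)
    also have "\<dots> = -1 - a1^2 - a2^2/d" using e0e0 by (simp add: power2_eq_square)
    also have "\<dots> < 0" 
    proof -
      have "a2^2/d \<ge> 0" using d0 by simp
      moreover have "a1^2 \<ge> 0" by simp
      ultimately show ?thesis by linarith
    qed
    finally show False using hyp_meet[OF _ wn1 wn2] disj by blast
  qed
  have not_gt: "\<not> c^2 > 1"
  proof
    assume gt: "c^2 > 1"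
    obtain p where p: "p \<in> ideal_boundary n1" "p \<in> ideal_boundary n2" using ex by blast
    hence pp: "mink p p = 0" "p$0 = 1" "mink p n1 = 0" "mink p n2 = 0"
      by (auto simp: ideal_boundary_def ideal_pts_def)
    have pnz: "p \<noteq> 0" using pp(2) by auto
    define v where "v = n2 - c *\<^sub>R n1"
    have "mink v p = 0" using pp by (simp add: v_def mink_sym[of n1 p] mink_sym[of n2 p])
    from perp_null[OF pp(1) pnz this] have "mink v v \<ge> 0" .
    moreover have "mink v v = 1 - c^2" using n1 n2 by (simp add: v_def c' c_def[symmetric] power2_eq_square algebra_simps)
    ultimately show False using gt by simp
  qed
  have c2: "c^2 = 1" using not_lt not_gt by linarith
  define q where "q = c *\<^sub>R n2 - n1"
  have N2: "n1 + q = c *\<^sub>R n2" by (simp add: q_def)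
  have r: "refl (n1 + q) = refl n2" unfolding N2 using c2 by (rule refl_sign)
  have nq: "mink n1 q = 0" using n1 c2 by (simp add: q_def c_def[symmetric] power2_eq_square)
  have qq: "mink q q = 0" using n1 n2 c2 by (simp add: q_def c' c_def[symmetric] power2_eq_square algebra_simps)
  have qnz: "q \<noteq> 0"
  proof
    assume "q = 0"
    hence "c *\<^sub>R n2 = n1" by (simp add: q_def)
    hence n2e: "n2 = c *\<^sub>R n1" using c2 by (metis power2_eq_square scaleR_one scaleR_scaleR)
    define w where "w = e0 - (mink e0 n1) *\<^sub>R n1"
    have wn1: "mink w n1 = 0" using n1 by (simp add: w_def)
    have wn2: "mink w n2 = 0" using wn1 by (simp add: n2e)
    have "mink w w = -1 - (mink e0 n1)^2" using n1 e0e0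
      by (simp add: w_def mink_sym[of n1 e0] power2_eq_square algebra_simps)
    hence "mink w w < 0" using zero_le_power2[of "mink e0 n1"] by linarith
    thus False using hyp_meet[OF _ wn1 wn2] disj by blast
  qed
  show ?thesis
    apply (rule exI[of _ n1], rule exI[of _ q])
    using n1 nq qq qnz Aeq by (simp add: r)
qed


lemma null_parallel: assumes "mink q q = 0" "mink r r = 0" "mink q r = 0" "q \<noteq> 0"
  shows "r = (r$0 / q$0) *\<^sub>R q"
proof -
  have q0: "q$0 \<noteq> 0" using null_time_zero assms(1,4) by blast
  define W where "W = (q$0) *\<^sub>R r - (r$0) *\<^sub>R q"
  have rq: "mink r q = 0" using assms(3) by (simp add: mink_sym)
  have "mink W W = 0" using assms rq by (simp add: W_def)
  moreover have "W$0 = 0" by (simp add: W_def)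
  ultimately have "W = 0" by (rule null_time_zero)
  hence "(q$0) *\<^sub>R r = (r$0) *\<^sub>R q" by (simp add: W_def)
  hence "(1/q$0) *\<^sub>R ((q$0) *\<^sub>R r) = (1/q$0) *\<^sub>R ((r$0) *\<^sub>R q)" by simp
  thus ?thesis using q0 by (simp add: field_simps)
qed

lemma par_n1: assumes "mink n1 n1 = 1" "mink n1 q = 0" "mink q q = 0"
  shows "mink (refl n1 (refl (n1+q) x)) n1 = mink x n1 + 2 * mink x q"
    and "mink (refl n1 (refl (n1+q) x)) q = mink x q"
proof -
  have s: "mink q n1 = 0" using assms(2) by (simp add: mink_sym)
  show "mink (refl n1 (refl (n1+q) x)) n1 = mink x n1 + 2 * mink x q"
    unfolding par_formula[OF assms] using assms s by (simp add: algebra_simps)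
  show "mink (refl n1 (refl (n1+q) x)) q = mink x q"
    unfolding par_formula[OF assms] using assms s by (simp add: algebra_simps)
qed

lemma par_not_inv: assumes "mink n1 n1 = 1" "mink n1 q = 0" "mink q q = 0" "q \<noteq> 0"
  and A: "\<forall>x\<in>H4. A x = refl n1 (refl (n1+q) x)"
  shows "A (A e0) \<noteq> e0"
proof
  assume eq: "A (A e0) = e0"
  have n: "mink (n1 + q) (n1 + q) = 1" using assms(1-3) by (simp add: mink_sym[of q n1])
  have H: "A e0 \<in> H4" using A e0_H4 refl_H4[OF assms(1)] refl_H4[OF n] by simp
  have "mink (A (A e0)) n1 = mink e0 n1 + 4 * mink e0 q"
    using A H e0_H4 par_n1[OF assms(1-3)] by simp
  hence "mink e0 q = 0" using eq by simp
  hence "q$0 = 0" by (simp add: e0_mink)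
  thus False using null_time_zero assms(3,4) by blast
qed

context nullpair begin

lemma linked_data:
  assumes n1: "mink n1 n1 = 1" "mink n1 q = 0" "mink q q = 0" "q \<noteq> 0"
    and A: "\<forall>x\<in>H4. A x = refl n1 (refl (n1+q) x)"
    and bq: "beta u v q = q" and bn: "beta u v n1 = -n1 + s *\<^sub>R q"
    and m1: "mink m1 m1 = 1" "mink m1 r = 0" "mink r r = 0" "r \<noteq> 0"
    and B: "\<forall>x\<in>H4. B x = refl m1 (refl (m1+r) x)"
    and br: "beta u v r = r" and bm: "beta u v m1 = -m1 + s' *\<^sub>R r"
  shows "linked A B"
proof -
  let ?b = "beta u v"
  define \<alpha> where "\<alpha> = (\<lambda>x. A (?b x))"
  define \<gamma> where "\<gamma> = (\<lambda>x. ?b (B x))"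
  have nA: "mink (n1 + q) (n1 + q) = 1" using n1(1-3) by (simp add: mink_sym[of q n1])
  have nB: "mink (m1 + r) (m1 + r) = 1" using m1(1-3) by (simp add: mink_sym[of r m1])
  have AH: "A x \<in> H4" if "x \<in> H4" for x using that A refl_H4[OF n1(1)] refl_H4[OF nA] by simp
  have BH: "B x \<in> H4" if "x \<in> H4" for x using that B refl_H4[OF m1(1)] refl_H4[OF nB] by simp
  have Am: "mink (A x) (A y) = mink x y" if "x \<in> H4" "y \<in> H4" for x y
    using that A refl_mink[OF n1(1)] refl_mink[OF nA] by simp
  have Bm: "mink (B x) (B y) = mink x y" if "x \<in> H4" "y \<in> H4" for x y
    using that B refl_mink[OF m1(1)] refl_mink[OF nB] by simp
  have bH: "?b x \<in> H4" if "x \<in> H4" for x using beta_H4 that .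
  have \<alpha>\<alpha>: "\<alpha> (\<alpha> x) = x" if x: "x \<in> H4" for x
  proof -
    have "\<alpha> (\<alpha> x) = A (?b (refl n1 (refl (n1+q) (?b x))))" using A bH x by (simp add: \<alpha>_def)
    also have "\<dots> = A (refl (n1+q) (refl n1 x))" using beta_conj[OF n1(1-3) bq bn] by simp
    also have "\<dots> = x" using A x refl_H4[OF n1(1)] refl_H4[OF nA] refl_refl[OF n1(1)] refl_refl[OF nA] by simp
    finally show ?thesis .
  qed
  have \<gamma>\<gamma>: "\<gamma> (\<gamma> x) = x" if x: "x \<in> H4" for x
  proof -
    have "\<gamma> (\<gamma> x) = ?b (refl m1 (refl (m1+r) (?b (B x))))" using B bH BH x by (simp add: \<gamma>_def)
    also have "\<dots> = refl (m1+r) (refl m1 (B x))" using beta_conj[OF m1(1-3) br bm] by simp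
    also have "\<dots> = x" using B x refl_refl[OF m1(1)] refl_refl[OF nB] by simp
    finally show ?thesis .
  qed
  have \<alpha>H: "\<alpha> x \<in> H4" if "x \<in> H4" for x using that AH bH by (simp add: \<alpha>_def)
  have \<gamma>H: "\<gamma> x \<in> H4" if "x \<in> H4" for x using that BH bH by (simp add: \<gamma>_def)
  have A2: "A (A e0) \<noteq> e0" by (rule par_not_inv[OF n1 A])
  have B2: "B (B e0) \<noteq> e0" by (rule par_not_inv[OF m1 B])
  have inv\<beta>: "involution ?b"
    unfolding involution_def
  proof (intro conjI)
    show "isometry ?b" by (rule isometryI[where g="?b"]) (auto simp: bH beta_beta beta_mink)
    show "\<forall>x\<in>H4. ?b (?b x) = x" by (simp add: beta_beta)
    show "\<exists>x\<in>H4. ?b x \<noteq> x"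
    proof (rule ccontr)
      assume "\<not> ?thesis"
      hence id: "\<forall>x\<in>H4. ?b x = x" by blast
      have "\<alpha> (\<alpha> e0) = A (A e0)" using id e0_H4 AH by (simp add: \<alpha>_def)
      thus False using \<alpha>\<alpha>[OF e0_H4] A2 by simp
    qed
  qed
  have inv\<alpha>: "involution \<alpha>"
    unfolding involution_def
  proof (intro conjI)
    have "\<forall>x\<in>H4. \<forall>y\<in>H4. mink (\<alpha> x) (\<alpha> y) = mink x y" by (simp add: \<alpha>_def Am bH beta_mink)
    thus "isometry \<alpha>" using \<alpha>H \<alpha>\<alpha> by (intro isometryI[where g=\<alpha>]) auto
    show "\<forall>x\<in>H4. \<alpha> (\<alpha> x) = x" using \<alpha>\<alpha> by blast
    show "\<exists>x\<in>H4. \<alpha> x \<noteq> x"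
    proof (rule ccontr)
      assume "\<not> ?thesis"
      hence id: "\<forall>x\<in>H4. \<alpha> x = x" by blast
      have Ab: "A x = ?b x" if "x \<in> H4" for x
        using id[rule_format, OF bH[OF that]] by (simp add: \<alpha>_def beta_beta)
      have "A (A e0) = ?b (?b e0)" using Ab e0_H4 bH by simp
      thus False using A2 by (simp add: beta_beta)
    qed
  qed
  have inv\<gamma>: "involution \<gamma>"
    unfolding involution_def
  proof (intro conjI)
    have "\<forall>x\<in>H4. \<forall>y\<in>H4. mink (\<gamma> x) (\<gamma> y) = mink x y" by (simp add: \<gamma>_def Bm BH beta_mink)
    thus "isometry \<gamma>" using \<gamma>H \<gamma>\<gamma> by (intro isometryI[where g=\<gamma>]) auto
    show "\<forall>x\<in>H4. \<gamma> (\<gamma> x) = x" using \<gamma>\<gamma> by blast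
    show "\<exists>x\<in>H4. \<gamma> x \<noteq> x"
    proof (rule ccontr)
      assume "\<not> ?thesis"
      hence id: "\<forall>x\<in>H4. \<gamma> x = x" by blast
      have Bb: "B x = ?b x" if "x \<in> H4" for x
      proof -
        have "?b (B x) = x" using id that by (simp add: \<gamma>_def)
        hence "?b (?b (B x)) = ?b x" by simp
        thus ?thesis by (simp add: beta_beta)
      qed
      have "B (B e0) = ?b (?b e0)" using Bb e0_H4 bH by simp
      thus False using B2 by (simp add: beta_beta)
    qed
  qed
  show ?thesis unfolding linked_def
    apply (rule exI[of _ \<alpha>], rule exI[of _ ?b], rule exI[of _ \<gamma>])
    using inv\<alpha> inv\<beta> inv\<gamma> by (simp add: \<alpha>_def \<gamma>_def beta_beta)
qed
end

theorem theorem7p2: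
  assumes "pure_parabolic A" and "pure_parabolic B"
  shows "linked A B"
proof -
  obtain n1 q where n1: "mink n1 n1 = 1" "mink n1 q = 0" "mink q q = 0" "q \<noteq> 0"
    and A: "\<forall>x\<in>H4. A x = refl n1 (refl (n1+q) x)" using parabolic_data[OF assms(1)] by blast
  obtain m1 r where m1: "mink m1 m1 = 1" "mink m1 r = 0" "mink r r = 0" "r \<noteq> 0"
    and B: "\<forall>x\<in>H4. B x = refl m1 (refl (m1+r) x)" using parabolic_data[OF assms(2)] by blast
  have qn1: "mink q n1 = 0" using n1(2) by (simp add: mink_sym)
  have rm1: "mink r m1 = 0" using m1(2) by (simp add: mink_sym)
  show ?thesis
  proof (cases "mink q r = 0")
    case False
    interpret nullpair q r using n1 m1 False by unfold_locales auto
    have rq: "mink r q = mink q r" by (simp add: mink_sym)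
    show ?thesis
    proof (rule linked_data[OF n1 A beta_u _ m1 B beta_v])
      show "beta q r n1 = - n1 + (2 / mink q r * mink n1 r) *\<^sub>R q"
        using n1 by (simp add: beta_def vec_eq_iff algebra_simps)
      show "beta q r m1 = - m1 + (2 / mink q r * mink m1 q) *\<^sub>R r"
        using m1 by (simp add: beta_def vec_eq_iff algebra_simps)
    qed
  next
    case True
    have q0: "q$0 \<noteq> 0" using null_time_zero n1(3,4) by blast
    define lam where "lam = r$0 / q$0"
    have rl: "r = lam *\<^sub>R q" unfolding lam_def by (rule null_parallel[OF n1(3) m1(3) True n1(4)])
    have l0: "lam \<noteq> 0" using rl m1(4) by auto
    define v where "v = (2 * q$0) *\<^sub>R e0 - q"
    have eq: "mink e0 q = - q$0" by (simp add: e0_mink)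
    have qe: "mink q e0 = - q$0" by (simp add: mink_sym[of q e0] e0_mink)
    have vv: "mink v v = 0" using n1(3) by (simp add: v_def eq qe e0e0 algebra_simps power2_eq_square)
    have qv: "mink q v = - 2 * (q$0)^2" using n1(3) by (simp add: v_def qe power2_eq_square)
    interpret nullpair q v using n1 vv qv q0 by unfold_locales auto
    have br: "beta q v r = r" using beta_u rl by (simp add: beta_scaleR)
    have m1q: "mink m1 q = 0" using m1(2) rl l0 by simp
    show ?thesis
    proof (rule linked_data[OF n1 A beta_u _ m1 B br])
      show "beta q v n1 = - n1 + (2 / mink q v * mink n1 v) *\<^sub>R q"
        using n1 by (simp add: beta_def vec_eq_iff algebra_simps)
      show "beta q v m1 = - m1 + (2 / mink q v * mink m1 v / lam) *\<^sub>R r"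
        using m1q l0 rl by (simp add: beta_def vec_eq_iff algebra_simps)
    qed
  qed
qed

end
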